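(* Let $\Gamma$ be a regular axis-parallel square grid in the plane whose squares have diameter $1$ (side length $1/\sqrt{2}$), and call the open squares of $\Gamma$ cells. Let $p$ and $q$ be any two points in the plane, each lying in some cell, with $|pq|\le 1$, and let $D(p,q)$ be the closed disk having segment $pq$ as a diameter. 1. If $p$ and $q$ are in different cells, then $D(p,q)$ intersects at most $7$ cells. 2. If $p$ and $q$ are in the same cell $\pi$, then the only cells that $D(p,q)$ can intersect are $\pi$ and its four $+$-neighbors.
   Context: The $+$-neighbors of a cell $\pi$ are the four cells that share a side with $\pi$. Cells are open (they do not contain their boundary), and disks are closed. *)

theory Defs
  imports "HOL-Analysis.Analysis"
begin

text \<open>Points of the plane are pairs of reals; the metric on real \<times> real in
HOL-Analysis is the Euclidean one. The grid has side length 1/sqrt 2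
(so each square has diameter 1) and an arbitrary offset (a, b).\<close>

definition grid_side :: real where
  "grid_side = 1 / sqrt 2"

definition cell :: "real \<Rightarrow> real \<Rightarrow> int \<Rightarrow> int \<Rightarrow> (real \<times> real) set" where
  "cell a b i j = {(x, y). a + of_int i * grid_side < x \<and> x < a + of_int (i + 1) * grid_side
                       \<and> b + of_int j * grid_side < y \<and> y < b + of_int (j + 1) * grid_side}"

definition diam_disk :: "real \<times> real \<Rightarrow> real \<times> real \<Rightarrow> (real \<times> real) set" where
  "diam_disk p q = cball (midpoint p q) (dist p q / 2)"

definition cells_hit :: "real \<Rightarrow> real \<Rightarrow> (real \<times> real) set \<Rightarrow> (int \<times> int) set" where
  "cells_hit a b S = {(k, l). S \<inter> cell a b k l \<noteq> {}}"

end

theory Submission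
  imports Defs
begin

lemma gs: "grid_side > 0" "grid_side * grid_side = 1/2" "grid_side > 1/2"
proof -
  show g0: "grid_side > 0" by (simp add: grid_side_def)
  show g2: "grid_side * grid_side = 1/2" by (simp add: grid_side_def)
  show "grid_side > 1/2"
  proof (rule ccontr)
    assume "\<not> grid_side > 1/2"
    hence "grid_side * grid_side \<le> (1/2)*(1/2)" using g0 by (intro mult_mono) auto
    thus False using g2 by simp
  qed
qed

lemma cellD:
  assumes "z \<in> cell a b k l"
  shows "a + of_int k * grid_side < fst z" "fst z < a + (of_int k + 1) * grid_side"
        "b + of_int l * grid_side < snd z" "snd z < b + (of_int l + 1) * grid_side"
  using assms by (auto simp: cell_def)

lemma diam_le:
  assumes "z1 \<in> diam_disk p q" "z2 \<in> diam_disk p q"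
  shows "dist z1 z2 \<le> dist p q"
proof -
  have "dist z1 z2 \<le> dist z1 (midpoint p q) + dist (midpoint p q) z2" by (rule dist_triangle)
  also have "\<dots> \<le> dist p q" using assms by (auto simp: diam_disk_def dist_commute)
  finally show ?thesis .
qed

lemma far:
  assumes z1: "z1 \<in> cell a b k1 l1" and z2: "z2 \<in> cell a b k2 l2"
    and k: "k2 \<ge> k1 + 2" and l: "l2 \<ge> l1 + 2 \<or> l1 \<ge> l2 + 2"
  shows "dist z1 z2 > 1"
proof -
  note s = gs
  obtain x1 y1 where e1: "z1 = (x1, y1)" by fastforce
  obtain x2 y2 where e2: "z2 = (x2, y2)" by fastforce
  have "real_of_int k2 \<ge> of_int k1 + 2" using k by linarith
  hence "of_int k2 * grid_side \<ge> (of_int k1 + 2) * grid_side" using s(1) by (intro mult_right_mono) auto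
  hence dx: "x2 - x1 > grid_side" using cellD[OF z1] cellD[OF z2] e1 e2 by (simp add: algebra_simps)
  have dy: "\<bar>y2 - y1\<bar> > grid_side"
  proof (cases "l2 \<ge> l1 + 2")
    case True
    hence "real_of_int l2 \<ge> of_int l1 + 2" by linarith
    hence "of_int l2 * grid_side \<ge> (of_int l1 + 2) * grid_side" using s(1) by (intro mult_right_mono) auto
    thus ?thesis using cellD[OF z1] cellD[OF z2] e1 e2 by (simp add: algebra_simps)
  next
    case False
    hence "real_of_int l1 \<ge> of_int l2 + 2" using l by linarith
    hence "of_int l1 * grid_side \<ge> (of_int l2 + 2) * grid_side" using s(1) by (intro mult_right_mono) auto
    thus ?thesis using cellD[OF z1] cellD[OF z2] e1 e2 by (simp add: algebra_simps)
  qed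
  have "grid_side * grid_side < (x2-x1) * (x2-x1)" using dx s(1)
    by (intro mult_strict_mono) auto
  hence "(x2-x1)^2 > grid_side * grid_side" by (simp add: power2_eq_square)
  moreover have "grid_side * grid_side < \<bar>y2-y1\<bar> * \<bar>y2-y1\<bar>" using dy s(1)
    by (intro mult_strict_mono) auto
  hence "(y2-y1)^2 > grid_side * grid_side" by (metis power2_abs power2_eq_square)
  ultimately have "(x1-x2)^2 + (y1-y2)^2 > 1" using s(2) by (simp add: power2_commute)
  hence "sqrt ((x1-x2)^2 + (y1-y2)^2) > 1" by simp
  thus ?thesis using e1 e2 by (simp add: dist_Pair_Pair dist_real_def)
qed

lemma col_bound:
  assumes z: "z \<in> cell a b k l" and d: "dist z c \<le> 1/2"
  shows "\<lfloor>(fst c - a)/grid_side\<rfloor> - 1 \<le> k \<and> k \<le> \<lfloor>(fst c - a)/grid_side\<rfloor> + 1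
       \<and> \<lfloor>(snd c - b)/grid_side\<rfloor> - 1 \<le> l \<and> l \<le> \<lfloor>(snd c - b)/grid_side\<rfloor> + 1"
proof -
  note s = gs
  define n where "n = \<lfloor>(fst c - a)/grid_side\<rfloor>"
  define m where "m = \<lfloor>(snd c - b)/grid_side\<rfloor>"
  have "of_int n \<le> (fst c - a)/grid_side" "(fst c - a)/grid_side < of_int n + 1"
    unfolding n_def by linarith+
  hence n1: "of_int n * grid_side \<le> fst c - a" "fst c - a < (of_int n + 1) * grid_side"
    using s(1) by (simp_all add: field_simps)
  have "of_int m \<le> (snd c - b)/grid_side" "(snd c - b)/grid_side < of_int m + 1"
    unfolding m_def by linarith+
  hence m1: "of_int m * grid_side \<le> snd c - b" "snd c - b < (of_int m + 1) * grid_side"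
    using s(1) by (simp_all add: field_simps)
  have "\<bar>fst z - fst c\<bar> \<le> 1/2" using dist_fst_le[of z c] d by (simp add: dist_real_def)
  hence fx: "fst z - fst c \<le> 1/2" "fst c - fst z \<le> 1/2" by linarith+
  have "\<bar>snd z - snd c\<bar> \<le> 1/2" using dist_snd_le[of z c] d by (simp add: dist_real_def)
  hence fy: "snd z - snd c \<le> 1/2" "snd c - snd z \<le> 1/2" by linarith+
  note zz = cellD[OF z]
  have "of_int k * grid_side < (of_int n + 2) * grid_side"
    using zz n1 fx s(3) unfolding ring_distribs by linarith
  hence "real_of_int k < of_int (n + 2)" using s(1) by simp
  hence a1: "k < n + 2" by (simp only: of_int_less_iff)
  have "(of_int n - 1) * grid_side < (of_int k + 1) * grid_side"
    using zz n1 fx s(3) unfolding ring_distribs by linarith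
  hence "real_of_int (n - 1) < of_int (k + 1)" using s(1) by simp
  hence a2: "n - 1 < k + 1" by (simp only: of_int_less_iff)
  have "of_int l * grid_side < (of_int m + 2) * grid_side"
    using zz m1 fy s(3) unfolding ring_distribs by linarith
  hence "real_of_int l < of_int (m + 2)" using s(1) by simp
  hence a3: "l < m + 2" by (simp only: of_int_less_iff)
  have "(of_int m - 1) * grid_side < (of_int l + 1) * grid_side"
    using zz m1 fy s(3) unfolding ring_distribs by linarith
  hence "real_of_int (m - 1) < of_int (l + 1)" using s(1) by simp
  hence a4: "m - 1 < l + 1" by (simp only: of_int_less_iff)
  show ?thesis using a1 a2 a3 a4 unfolding n_def[symmetric] m_def[symmetric] by linarith
qed


lemma oneD:
  fixes s c p1 q1 x :: real and i k :: int
  assumes s: "s > 0"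
    and p: "c + of_int i * s < p1" "p1 < c + (of_int i + 1) * s"
    and q: "c + of_int i * s < q1" "q1 < c + (of_int i + 1) * s"
    and x: "c + of_int k * s < x" "x < c + (of_int k + 1) * s"
  shows "(k \<noteq> i \<longrightarrow> (x-p1)*(x-q1) > 0) \<and> (k \<ge> i + 2 \<or> i \<ge> k + 2 \<longrightarrow> (x-p1)*(x-q1) > s * s)
         \<and> (x-p1)*(x-q1) > - (s * s) / 4"
proof (intro conjI impI)
  assume "k \<noteq> i"
  hence "k \<ge> i + 1 \<or> i \<ge> k + 1" by linarith
  thus "(x-p1)*(x-q1) > 0"
  proof
    assume "k \<ge> i + 1"
    hence "real_of_int k \<ge> of_int i + 1" by linarith
    hence "of_int k * s \<ge> (of_int i + 1) * s" using s by (intro mult_right_mono) auto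
    hence "x - p1 > 0" "x - q1 > 0" using p q x by linarith+
    thus ?thesis by simp
  next
    assume "i \<ge> k + 1"
    hence "real_of_int i \<ge> of_int k + 1" by linarith
    hence "of_int i * s \<ge> (of_int k + 1) * s" using s by (intro mult_right_mono) auto
    hence "x - p1 < 0" "x - q1 < 0" using p q x by linarith+
    thus ?thesis by (simp add: mult_neg_neg)
  qed
next
  assume "k \<ge> i + 2 \<or> i \<ge> k + 2"
  thus "(x-p1)*(x-q1) > s * s"
  proof
    assume "k \<ge> i + 2"
    hence "real_of_int k \<ge> of_int i + 2" by linarith
    hence "of_int k * s \<ge> (of_int i + 2) * s" using s by (intro mult_right_mono) auto
    hence "x - p1 > s" "x - q1 > s" using p q x unfolding ring_distribs by linarith+
    thus ?thesis using s by (intro mult_strict_mono) auto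
  next
    assume "i \<ge> k + 2"
    hence "real_of_int i \<ge> of_int k + 2" by linarith
    hence "of_int i * s \<ge> (of_int k + 2) * s" using s by (intro mult_right_mono) auto
    hence "p1 - x > s" "q1 - x > s" using p q x unfolding ring_distribs by linarith+
    hence "(p1-x)*(q1-x) > s * s" using s by (intro mult_strict_mono) auto
    thus ?thesis by (simp add: algebra_simps)
  qed
next
  have "\<bar>p1 - q1\<bar> < s" using p q unfolding ring_distribs by linarith
  hence "\<bar>p1 - q1\<bar> * \<bar>p1 - q1\<bar> < s * s" by (intro mult_strict_mono) auto
  hence lt: "(p1 - q1)*(p1-q1) < s * s" by (metis abs_mult_self_eq)
  have "(x-p1)*(x-q1) = (x - (p1+q1)/2)^2 - (p1-q1)*(p1-q1)/4"
    by (simp add: power2_eq_square field_simps)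
  moreover have "(x - (p1+q1)/2)^2 \<ge> 0" by simp
  ultimately show "(x-p1)*(x-q1) > - (s * s) / 4" using lt by linarith
qed

lemma disk_ineq:
  assumes "z \<in> diam_disk p q"
  shows "(fst z - fst p)*(fst z - fst q) + (snd z - snd p)*(snd z - snd q) \<le> 0"
proof -
  obtain x y where ez: "z = (x,y)" by fastforce
  obtain p1 p2 where ep: "p = (p1,p2)" by fastforce
  obtain q1 q2 where eq: "q = (q1,q2)" by fastforce
  have mp: "midpoint p q = ((p1+q1)/2, (p2+q2)/2)" using ep eq by (simp add: midpoint_def)
  have "sqrt ((x - (p1+q1)/2)^2 + (y - (p2+q2)/2)^2) \<le> sqrt ((p1-q1)^2 + (p2-q2)^2) / 2"
    using assms ez ep eq mp by (simp add: diam_disk_def dist_Pair_Pair dist_real_def dist_commute)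
  also have "\<dots> = sqrt (((p1-q1)^2 + (p2-q2)^2) / 4)" by (simp add: real_sqrt_divide)
  finally have "(x - (p1+q1)/2)^2 + (y - (p2+q2)/2)^2 \<le> ((p1-q1)^2 + (p2-q2)^2) / 4"
    by simp
  thus ?thesis using ez ep eq by (simp add: power2_eq_square field_simps)
qed

lemma same_cell:
  assumes p: "p \<in> cell a b i j" and q: "q \<in> cell a b i j"
    and z: "z \<in> cell a b k l" and zd: "z \<in> diam_disk p q"
  shows "(k, l) \<in> {(i, j), (i + 1, j), (i - 1, j), (i, j + 1), (i, j - 1)}"
proof (rule ccontr)
  assume nin: "(k, l) \<notin> {(i, j), (i + 1, j), (i - 1, j), (i, j + 1), (i, j - 1)}"
  note s = gs
  have X: "(k \<noteq> i \<longrightarrow> (fst z - fst p)*(fst z - fst q) > 0)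
     \<and> (k \<ge> i + 2 \<or> i \<ge> k + 2 \<longrightarrow> (fst z - fst p)*(fst z - fst q) > grid_side * grid_side)
     \<and> (fst z - fst p)*(fst z - fst q) > - (grid_side * grid_side) / 4"
    by (rule oneD[OF s(1)]) (use cellD[OF p] cellD[OF q] cellD[OF z] in auto)
  have Y: "(l \<noteq> j \<longrightarrow> (snd z - snd p)*(snd z - snd q) > 0)
     \<and> (l \<ge> j + 2 \<or> j \<ge> l + 2 \<longrightarrow> (snd z - snd p)*(snd z - snd q) > grid_side * grid_side)
     \<and> (snd z - snd p)*(snd z - snd q) > - (grid_side * grid_side) / 4"
    by (rule oneD[OF s(1)]) (use cellD[OF p] cellD[OF q] cellD[OF z] in auto)
  have ss: "grid_side * grid_side > 0" using s(1) by simp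
  have "(k \<noteq> i \<and> l \<noteq> j) \<or> (k = i \<and> (l \<ge> j + 2 \<or> j \<ge> l + 2)) \<or> (l = j \<and> (k \<ge> i + 2 \<or> i \<ge> k + 2))"
    using nin by auto
  note cs = this
  define XV where "XV = (fst z - fst p)*(fst z - fst q)"
  define YV where "YV = (snd z - snd p)*(snd z - snd q)"
  have hx1: "k \<noteq> i \<Longrightarrow> XV > 0" and hx2: "k \<ge> i + 2 \<or> i \<ge> k + 2 \<Longrightarrow> XV > grid_side * grid_side"
    and hx3: "XV > - (grid_side * grid_side) / 4" using X unfolding XV_def by blast+
  have hy1: "l \<noteq> j \<Longrightarrow> YV > 0" and hy2: "l \<ge> j + 2 \<or> j \<ge> l + 2 \<Longrightarrow> YV > grid_side * grid_side"
    and hy3: "YV > - (grid_side * grid_side) / 4" using Y unfolding YV_def by blast+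
  have c1: "XV + YV > 0" if "k \<noteq> i" "l \<noteq> j" using hx1[OF that(1)] hy1[OF that(2)] by linarith
  have c2: "XV + YV > 0" if "l \<ge> j + 2 \<or> j \<ge> l + 2" using hx3 hy2[OF that] ss by linarith
  have c3: "XV + YV > 0" if "k \<ge> i + 2 \<or> i \<ge> k + 2" using hy3 hx2[OF that] ss by linarith
  have "XV + YV > 0" using cs c1 c2 c3 by blast
  thus False using disk_ineq[OF zd] unfolding XV_def YV_def by linarith
qed

lemma part2:
  assumes p_in: "p \<in> cell a b i j" and q_in: "q \<in> cell a b i j"
  shows "cells_hit a b (diam_disk p q) \<subseteq> {(i, j), (i + 1, j), (i - 1, j), (i, j + 1), (i, j - 1)}"
proof -
  show "cells_hit a b (diam_disk p q) \<subseteq> {(i, j), (i + 1, j), (i - 1, j), (i, j + 1), (i, j - 1)}"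
  proof
    fix kl assume "kl \<in> cells_hit a b (diam_disk p q)"
    then obtain k l z where kl: "kl = (k, l)" "z \<in> diam_disk p q" "z \<in> cell a b k l"
      by (auto simp: cells_hit_def)
    show "kl \<in> {(i, j), (i + 1, j), (i - 1, j), (i, j + 1), (i, j - 1)}"
      using same_cell[OF p_in q_in kl(3) kl(2)] kl(1) by simp
  qed
qed

lemma part1:
  assumes close: "dist p q \<le> 1"
  shows "finite (cells_hit a b (diam_disk p q)) \<and> card (cells_hit a b (diam_disk p q)) \<le> 7"
proof -
  define H where "H = cells_hit a b (diam_disk p q)"
  define c where "c = midpoint p q"
  define n where "n = \<lfloor>(fst c - a)/grid_side\<rfloor>"
  define m where "m = \<lfloor>(snd c - b)/grid_side\<rfloor>"
  have mem: "\<exists>z. z \<in> diam_disk p q \<and> z \<in> cell a b k l" if "(k, l) \<in> H" for k l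
    using that by (auto simp: H_def cells_hit_def)
  have bnd: "n - 1 \<le> k \<and> k \<le> n + 1 \<and> m - 1 \<le> l \<and> l \<le> m + 1" if kl: "(k, l) \<in> H" for k l
  proof -
    obtain z where z: "z \<in> diam_disk p q" "z \<in> cell a b k l" using mem[OF kl] by blast
    have "dist z c \<le> 1/2" using z(1) close by (simp add: diam_disk_def c_def dist_commute)
    thus ?thesis using col_bound[OF z(2)] unfolding n_def m_def by blast
  qed
  have nb: "\<not> ((k1, l1) \<in> H \<and> (k2, l2) \<in> H)"
    if hk: "k2 \<ge> k1 + 2" "l2 \<ge> l1 + 2 \<or> l1 \<ge> l2 + 2" for k1 l1 k2 l2
  proof
    assume h: "(k1, l1) \<in> H \<and> (k2, l2) \<in> H"
    obtain z1 where z1: "z1 \<in> diam_disk p q" "z1 \<in> cell a b k1 l1" using mem h by blast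
    obtain z2 where z2: "z2 \<in> diam_disk p q" "z2 \<in> cell a b k2 l2" using mem h by blast
    have "dist z1 z2 > 1" by (rule far[OF z1(2) z2(2) hk])
    moreover have "dist z1 z2 \<le> 1" using diam_le[OF z1(1) z2(1)] close by linarith
    ultimately show False by linarith
  qed
  have c1: "\<not> ((n-1, m-1) \<in> H \<and> (n+1, m+1) \<in> H)" by (rule nb) auto
  have c2: "\<not> ((n-1, m+1) \<in> H \<and> (n+1, m-1) \<in> H)" by (rule nb) auto
  have in9: "k \<in> {n-1, n, n+1} \<and> l \<in> {m-1, m, m+1}" if "(k, l) \<in> H" for k l
    using bnd[OF that] by auto
  obtain e1 e2 where e: "e1 \<notin> H" "e2 \<notin> H"
    "e1 \<in> {(n-1, m-1), (n+1, m+1)}" "e2 \<in> {(n-1, m+1), (n+1, m-1)}"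
    using c1 c2 by blast
  define L where "L = filter (\<lambda>x. x \<noteq> e1 \<and> x \<noteq> e2)
     [(n-1, m-1), (n-1, m), (n-1, m+1), (n, m-1), (n, m), (n, m+1), (n+1, m-1), (n+1, m), (n+1, m+1)]"
  have len: "length L = 7" using e(3,4) unfolding L_def by (elim insertE emptyE; simp)
  have sub: "H \<subseteq> set L"
  proof
    fix kl assume kl: "kl \<in> H"
    obtain k l where "kl = (k, l)" by fastforce
    hence kl': "k \<in> {n-1, n, n+1}" "l \<in> {m-1, m, m+1}" using in9[of k l] kl by auto
    have "kl \<noteq> e1" "kl \<noteq> e2" using kl e(1,2) by auto
    moreover have "(k, l) \<in> set [(n-1, m-1), (n-1, m), (n-1, m+1), (n, m-1), (n, m), (n, m+1), (n+1, m-1), (n+1, m), (n+1, m+1)]"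
      using kl' by (simp only: insert_iff empty_iff simp_thms) (elim disjE; simp)
    ultimately show "kl \<in> set L" using \<open>kl = (k, l)\<close> unfolding L_def set_filter by simp
  qed
  have "finite H" using sub finite_subset by blast
  moreover have "card H \<le> 7" using card_mono[OF _ sub] card_length[of L] len by simp
  ultimately show ?thesis unfolding H_def by simp
qed


theorem lemma4:
  fixes a b :: real and p q :: "real \<times> real" and i j i' j' :: int
  assumes p_in: "p \<in> cell a b i j"
    and q_in: "q \<in> cell a b i' j'"
    and close: "dist p q \<le> 1"
  shows "((i, j) \<noteq> (i', j') \<longrightarrow>
            finite (cells_hit a b (diam_disk p q)) \<and> card (cells_hit a b (diam_disk p q)) \<le> 7)
       \<and> ((i, j) = (i', j') \<longrightarrow>
            cells_hit a b (diam_disk p q) \<subseteq> {(i, j), (i + 1, j), (i - 1, j), (i, j + 1), (i, j - 1)})"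
  using part1[OF close, of a b] part2[OF p_in, of q] q_in by auto

end
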